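(* Let $\mathscr{P},\mathscr{Q}$ be finite posets and $\mathscr{R}$ a finite poset. (1) $\mathscr{R}\in SAv(\mathscr{P}\sqcup\mathscr{Q})$ if and only if for every partition $(R_1,R_2)$ of the ground set of $\mathscr{R}$ into two blocks, with $\mathscr{R}_1,\mathscr{R}_2$ the induced subposets on $R_1,R_2$, either $\mathscr{R}_1\in SAv(\mathscr{P})$ or $\mathscr{R}_2\in SAv(\mathscr{Q})$. (2) If $\mathscr{R}\in SAv(\mathscr{P}\oplus\mathscr{Q})$, then for every ordered partition $(R_1,R_2)$ of $\mathscr{R}$ into two blocks, either $\mathscr{R}_1\in SAv(\mathscr{P})$ or $\mathscr{R}_2\in SAv(\mathscr{Q})$. If $\mathscr{R}\notin SAv(\mathscr{P}\oplus\mathscr{Q})$, then there exists a weakly ordered partition $(R_1,R_2)$ of $\mathscr{R}$ into two blocks such that $\mathscr{R}_1\notin SAv(\mathscr{P})$ and $\mathscr{R}_2\notin SAv(\mathscr{Q})$.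
   Context: A poset $\mathscr{R}$ weakly contains $\mathscr{P}$ if there is an injective order-preserving map $\mathscr{P}\to\mathscr{R}$; $\mathscr{R}$ strongly avoids $\mathscr{P}$ otherwise, and $SAv(\mathscr{P})$ is the class of finite posets strongly avoiding $\mathscr{P}$. A partition into two blocks is an ordered pair $(R_1,R_2)$ of disjoint subsets whose union is the ground set. It is an ordered partition if $x\le y$ for all $x\in R_1$, $y\in R_2$, and a weakly ordered partition if $x\not\ge y$ for all $x\in R_1$, $y\in R_2$. The disjoint union $\mathscr{P}\sqcup\mathscr{Q}$ has as ground set the disjoint union of the ground sets, with $x\le y$ iff $x\le y$ in $\mathscr{P}$ or in $\mathscr{Q}$. The linear sum $\mathscr{P}\oplus\mathscr{Q}$ has the same ground set, with $x\le y$ iff $x\le y$ in $\mathscr{P}$, or $x\le y$ in $\mathscr{Q}$, or $x\in\mathscr{P}$ and $y\in\mathscr{Q}$. *)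

theory Defs
  imports Main
begin

text \<open>A poset is represented by a ground set A and a relation le, which is a partial
order on A. Induced subposets are obtained by restricting the ground set and keeping le.\<close>

definition poset_on :: "'a set \<Rightarrow> ('a \<Rightarrow> 'a \<Rightarrow> bool) \<Rightarrow> bool" where
  "poset_on A le \<longleftrightarrow>
     (\<forall>x\<in>A. le x x) \<and>
     (\<forall>x\<in>A. \<forall>y\<in>A. le x y \<and> le y x \<longrightarrow> x = y) \<and>
     (\<forall>x\<in>A. \<forall>y\<in>A. \<forall>z\<in>A. le x y \<and> le y z \<longrightarrow> le x z)"

definition finite_poset :: "'a set \<Rightarrow> ('a \<Rightarrow> 'a \<Rightarrow> bool) \<Rightarrow> bool" where
  "finite_poset A le \<longleftrightarrow> finite A \<and> poset_on A le"

definition weakly_contains ::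
  "'r set \<Rightarrow> ('r \<Rightarrow> 'r \<Rightarrow> bool) \<Rightarrow> 'p set \<Rightarrow> ('p \<Rightarrow> 'p \<Rightarrow> bool) \<Rightarrow> bool" where
  "weakly_contains R leR P leP \<longleftrightarrow>
     (\<exists>f. f ` P \<subseteq> R \<and> inj_on f P \<and>
          (\<forall>x\<in>P. \<forall>y\<in>P. leP x y \<longrightarrow> leR (f x) (f y)))"

definition in_SAv ::
  "'r set \<Rightarrow> ('r \<Rightarrow> 'r \<Rightarrow> bool) \<Rightarrow> 'p set \<Rightarrow> ('p \<Rightarrow> 'p \<Rightarrow> bool) \<Rightarrow> bool" where
  "in_SAv R leR P leP \<longleftrightarrow> finite_poset R leR \<and> \<not> weakly_contains R leR P leP"

text \<open>Disjoint union and linear sum, on the ground set P <+> Q.\<close>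
fun disj_union_le ::
  "('p \<Rightarrow> 'p \<Rightarrow> bool) \<Rightarrow> ('q \<Rightarrow> 'q \<Rightarrow> bool) \<Rightarrow> 'p + 'q \<Rightarrow> 'p + 'q \<Rightarrow> bool" where
  "disj_union_le leP leQ (Inl x) (Inl y) = leP x y"
| "disj_union_le leP leQ (Inr x) (Inr y) = leQ x y"
| "disj_union_le leP leQ (Inl x) (Inr y) = False"
| "disj_union_le leP leQ (Inr x) (Inl y) = False"

fun lin_sum_le ::
  "('p \<Rightarrow> 'p \<Rightarrow> bool) \<Rightarrow> ('q \<Rightarrow> 'q \<Rightarrow> bool) \<Rightarrow> 'p + 'q \<Rightarrow> 'p + 'q \<Rightarrow> bool" where
  "lin_sum_le leP leQ (Inl x) (Inl y) = leP x y"
| "lin_sum_le leP leQ (Inr x) (Inr y) = leQ x y"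
| "lin_sum_le leP leQ (Inl x) (Inr y) = True"
| "lin_sum_le leP leQ (Inr x) (Inl y) = False"

definition partition2 :: "'a set \<Rightarrow> 'a set \<Rightarrow> 'a set \<Rightarrow> bool" where
  "partition2 R R1 R2 \<longleftrightarrow> R1 \<inter> R2 = {} \<and> R1 \<union> R2 = R"

definition ordered_partition2 ::
  "'a set \<Rightarrow> ('a \<Rightarrow> 'a \<Rightarrow> bool) \<Rightarrow> 'a set \<Rightarrow> 'a set \<Rightarrow> bool" where
  "ordered_partition2 R le R1 R2 \<longleftrightarrow> partition2 R R1 R2 \<and> (\<forall>x\<in>R1. \<forall>y\<in>R2. le x y)"

definition weakly_ordered_partition2 ::
  "'a set \<Rightarrow> ('a \<Rightarrow> 'a \<Rightarrow> bool) \<Rightarrow> 'a set \<Rightarrow> 'a set \<Rightarrow> bool" where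
  "weakly_ordered_partition2 R le R1 R2 \<longleftrightarrow> partition2 R R1 R2 \<and> (\<forall>x\<in>R1. \<forall>y\<in>R2. \<not> le y x)"

end

theory Submission
  imports Defs
begin

lemma fp_sub: "finite_poset R le \<Longrightarrow> S \<subseteq> R \<Longrightarrow> finite_poset S le"
  unfolding finite_poset_def poset_on_def by (meson finite_subset subsetD)

lemma sav_sub: "finite_poset R le \<Longrightarrow> S \<subseteq> R \<Longrightarrow> in_SAv S le P leP \<longleftrightarrow> \<not> weakly_contains S le P leP"
  using fp_sub unfolding in_SAv_def by blast

lemma combine:
  assumes f: "f ` P \<subseteq> R1" "inj_on f P" and g: "g ` Q \<subseteq> R2" "inj_on g Q"
    and d: "R1 \<inter> R2 = {}"
  shows "inj_on (case_sum f g) (P <+> Q)"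
  unfolding inj_on_def
proof (intro ballI impI)
  fix a b assume a: "a \<in> P <+> Q" and b: "b \<in> P <+> Q" and e: "case_sum f g a = case_sum f g b"
  show "a = b"
  proof (cases a)
    case (Inl x) note ax = this
    show ?thesis
    proof (cases b)
      case (Inl y) then show ?thesis using ax a b e f(2) by (auto simp: inj_on_def)
    next
      case (Inr y) then have False using ax a b e f(1) g(1) d by auto
      then show ?thesis ..
    qed
  next
    case (Inr x) note ax = this
    show ?thesis
    proof (cases b)
      case (Inl y) then have False using ax a b e f(1) g(1) d by auto
      then show ?thesis ..
    next
      case (Inr y) then show ?thesis using ax a b e g(2) by (auto simp: inj_on_def)
    qed
  qed
qed

lemma mono_inl:
  assumes "\<forall>x\<in>P <+> Q. \<forall>y\<in>P <+> Q. le x y \<longrightarrow> leR (h x) (h y)"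
    and "\<And>x y. le (Inl x) (Inl y) = leP x y"
  shows "\<forall>x\<in>P. \<forall>y\<in>P. leP x y \<longrightarrow> leR ((h \<circ> Inl) x) ((h \<circ> Inl) y)"
proof (intro ballI impI)
  fix x y assume "x \<in> P" "y \<in> P" "leP x y"
  then show "leR ((h \<circ> Inl) x) ((h \<circ> Inl) y)"
    using assms(1)[rule_format, of "Inl x" "Inl y"] assms(2) by (simp add: InlI InrI)
qed

lemma mono_inr:
  assumes "\<forall>x\<in>P <+> Q. \<forall>y\<in>P <+> Q. le x y \<longrightarrow> leR (h x) (h y)"
    and "\<And>x y. le (Inr x) (Inr y) = leQ x y"
  shows "\<forall>x\<in>Q. \<forall>y\<in>Q. leQ x y \<longrightarrow> leR ((h \<circ> Inr) x) ((h \<circ> Inr) y)"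
proof (intro ballI impI)
  fix x y assume "x \<in> Q" "y \<in> Q" "leQ x y"
  then show "leR ((h \<circ> Inr) x) ((h \<circ> Inr) y)"
    using assms(1)[rule_format, of "Inr x" "Inr y"] assms(2) by (simp add: InlI InrI)
qed

lemma mono_case:
  assumes f: "\<forall>x\<in>P. \<forall>y\<in>P. leP x y \<longrightarrow> leR (f x) (f y)"
    and g: "\<forall>x\<in>Q. \<forall>y\<in>Q. leQ x y \<longrightarrow> leR (g x) (g y)"
    and c: "\<forall>x\<in>P. \<forall>y\<in>Q. le (Inl x) (Inr y) \<longrightarrow> leR (f x) (g y)"
    and d: "\<forall>x\<in>Q. \<forall>y\<in>P. le (Inr x) (Inl y) \<longrightarrow> leR (g x) (f y)"
    and l: "\<And>x y. le (Inl x) (Inl y) = leP x y" and r: "\<And>x y. le (Inr x) (Inr y) = leQ x y"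
  shows "\<forall>a\<in>P <+> Q. \<forall>b\<in>P <+> Q. le a b \<longrightarrow> leR (case_sum f g a) (case_sum f g b)"
proof (intro ballI impI)
  fix a b assume a: "a \<in> P <+> Q" and b: "b \<in> P <+> Q" and ab: "le a b"
  show "leR (case_sum f g a) (case_sum f g b)"
  proof (cases a)
    case (Inl x) note ax=this
    show ?thesis
    proof (cases b)
      case (Inl y) thus ?thesis using ax a b ab f l by auto
    next
      case (Inr y) thus ?thesis using ax a b ab c by auto
    qed
  next
    case (Inr x) note ax=this
    show ?thesis
    proof (cases b)
      case (Inl y) thus ?thesis using ax a b ab d by auto
    next
      case (Inr y) thus ?thesis using ax a b ab g r by auto
    qed
  qed
qed

lemma inj_inl: "inj_on h (P <+> Q) \<Longrightarrow> inj_on (h \<circ> Inl) P"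
  unfolding inj_on_def by (metis InlI comp_apply sum.inject(1))

lemma inj_inr: "inj_on h (P <+> Q) \<Longrightarrow> inj_on (h \<circ> Inr) Q"
  unfolding inj_on_def by (metis InrI comp_apply sum.inject(2))

theorem mainTheorem15:
  fixes P :: "'p set" and leP :: "'p \<Rightarrow> 'p \<Rightarrow> bool"
    and Q :: "'q set" and leQ :: "'q \<Rightarrow> 'q \<Rightarrow> bool"
    and R :: "'r set" and leR :: "'r \<Rightarrow> 'r \<Rightarrow> bool"
  assumes "finite_poset P leP" and "finite_poset Q leQ" and "finite_poset R leR"
  shows "(in_SAv R leR (P <+> Q) (disj_union_le leP leQ) \<longleftrightarrow>
            (\<forall>R1 R2. partition2 R R1 R2 \<longrightarrow> in_SAv R1 leR P leP \<or> in_SAv R2 leR Q leQ))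
       \<and> (in_SAv R leR (P <+> Q) (lin_sum_le leP leQ) \<longrightarrow>
            (\<forall>R1 R2. ordered_partition2 R leR R1 R2 \<longrightarrow> in_SAv R1 leR P leP \<or> in_SAv R2 leR Q leQ))
       \<and> (\<not> in_SAv R leR (P <+> Q) (lin_sum_le leP leQ) \<longrightarrow>
            (\<exists>R1 R2. weakly_ordered_partition2 R leR R1 R2 \<and>
                     \<not> in_SAv R1 leR P leP \<and> \<not> in_SAv R2 leR Q leQ))"
proof (intro conjI)
  have R: "finite_poset R leR" by fact
  have po: "\<And>x. x \<in> R \<Longrightarrow> leR x x"
    "\<And>x y. x \<in> R \<Longrightarrow> y \<in> R \<Longrightarrow> leR x y \<Longrightarrow> leR y x \<Longrightarrow> x = y"
    "\<And>x y z. x \<in> R \<Longrightarrow> y \<in> R \<Longrightarrow> z \<in> R \<Longrightarrow> leR x y \<Longrightarrow> leR y z \<Longrightarrow> leR x z"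
    using R unfolding finite_poset_def poset_on_def by blast+
  have SR: "in_SAv R leR X le \<longleftrightarrow> \<not> weakly_contains R leR X le" for X :: "('p+'q) set" and le
    using R unfolding in_SAv_def by blast
  show "in_SAv R leR (P <+> Q) (disj_union_le leP leQ) \<longleftrightarrow>
            (\<forall>R1 R2. partition2 R R1 R2 \<longrightarrow> in_SAv R1 leR P leP \<or> in_SAv R2 leR Q leQ)"
  proof
    assume A: "in_SAv R leR (P <+> Q) (disj_union_le leP leQ)"
    show "\<forall>R1 R2. partition2 R R1 R2 \<longrightarrow> in_SAv R1 leR P leP \<or> in_SAv R2 leR Q leQ"
    proof (intro allI impI, rule ccontr)
      fix R1 R2 assume pa: "partition2 R R1 R2" and n: "\<not> (in_SAv R1 leR P leP \<or> in_SAv R2 leR Q leQ)"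
      have s: "R1 \<subseteq> R" "R2 \<subseteq> R" "R1 \<inter> R2 = {}" using pa unfolding partition2_def by auto
      have w1: "weakly_contains R1 leR P leP" using n sav_sub[OF R s(1), of P leP] by simp
      have w2: "weakly_contains R2 leR Q leQ" using n sav_sub[OF R s(2), of Q leQ] by simp
      from w1 w2 obtain f g where
        f: "f ` P \<subseteq> R1" "inj_on f P" "\<forall>x\<in>P. \<forall>y\<in>P. leP x y \<longrightarrow> leR (f x) (f y)" and
        g: "g ` Q \<subseteq> R2" "inj_on g Q" "\<forall>x\<in>Q. \<forall>y\<in>Q. leQ x y \<longrightarrow> leR (g x) (g y)"
        unfolding weakly_contains_def by (elim exE conjE) (rule that; assumption)
      have "weakly_contains R leR (P <+> Q) (disj_union_le leP leQ)"
        unfolding weakly_contains_def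
      proof (intro exI conjI)
        show "case_sum f g ` (P <+> Q) \<subseteq> R" using f(1) g(1) s(1,2) unfolding image_subset_iff by (auto elim!: PlusE)
        show "inj_on (case_sum f g) (P <+> Q)" using combine[OF f(1,2) g(1,2) s(3)] .
        show "\<forall>x\<in>P <+> Q. \<forall>y\<in>P <+> Q. disj_union_le leP leQ x y \<longrightarrow> leR (case_sum f g x) (case_sum f g y)"
          by (rule mono_case[OF f(3) g(3)]) simp_all
      qed
      with A show False using SR[of "P <+> Q" "disj_union_le leP leQ"] by simp
    qed
  next
    assume B: "\<forall>R1 R2. partition2 R R1 R2 \<longrightarrow> in_SAv R1 leR P leP \<or> in_SAv R2 leR Q leQ"
    show "in_SAv R leR (P <+> Q) (disj_union_le leP leQ)"
    proof (rule ccontr)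
      assume "\<not> ?thesis"
      then have "weakly_contains R leR (P <+> Q) (disj_union_le leP leQ)" using SR[of "P <+> Q" "disj_union_le leP leQ"] by simp
      then obtain h where h: "h ` (P <+> Q) \<subseteq> R" "inj_on h (P <+> Q)"
        "\<forall>x\<in>P <+> Q. \<forall>y\<in>P <+> Q. disj_union_le leP leQ x y \<longrightarrow> leR (h x) (h y)"
        unfolding weakly_contains_def by (elim exE conjE) (rule that; assumption)
      define R1 where "R1 = (h \<circ> Inl) ` P"
      have pa: "partition2 R R1 (R - R1)" using h(1) unfolding partition2_def R1_def image_subset_iff by auto
      have "weakly_contains R1 leR P leP"
        unfolding weakly_contains_def
      proof (rule exI[of _ "h \<circ> Inl"], intro conjI)
        show "(h \<circ> Inl) ` P \<subseteq> R1" unfolding R1_def by auto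
        show "inj_on (h \<circ> Inl) P" using h(2) by (rule inj_inl)
        show "\<forall>x\<in>P. \<forall>y\<in>P. leP x y \<longrightarrow> leR ((h \<circ> Inl) x) ((h \<circ> Inl) y)" using mono_inl[where P=P and Q=Q and le="disj_union_le leP leQ" and leR=leR and h=h and leP=leP, OF h(3)] by simp
      qed
      moreover have "weakly_contains (R - R1) leR Q leQ"
        unfolding weakly_contains_def
      proof (rule exI[of _ "h \<circ> Inr"], intro conjI)
        show "(h \<circ> Inr) ` Q \<subseteq> R - R1"
        proof
          fix r assume "r \<in> (h \<circ> Inr) ` Q"
          then obtain q where q: "q \<in> Q" "r = h (Inr q)" by auto
          have "r \<in> R" using q h(1) unfolding image_subset_iff by auto
          moreover have "r \<notin> R1"
          proof
            assume "r \<in> R1"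
            then obtain p where p: "p \<in> P" "r = h (Inl p)" unfolding R1_def by auto
            have "Inl p = Inr q" using h(2) p q unfolding inj_on_def by blast
            then show False by simp
          qed
          ultimately show "r \<in> R - R1" by blast
        qed
        show "inj_on (h \<circ> Inr) Q" using h(2) by (rule inj_inr)
        show "\<forall>x\<in>Q. \<forall>y\<in>Q. leQ x y \<longrightarrow> leR ((h \<circ> Inr) x) ((h \<circ> Inr) y)" using mono_inr[where P=P and Q=Q and le="disj_union_le leP leQ" and leR=leR and h=h and leQ=leQ, OF h(3)] by simp
      qed
      ultimately show False using B pa unfolding in_SAv_def by blast
    qed
  qed
  show "in_SAv R leR (P <+> Q) (lin_sum_le leP leQ) \<longrightarrow>
            (\<forall>R1 R2. ordered_partition2 R leR R1 R2 \<longrightarrow> in_SAv R1 leR P leP \<or> in_SAv R2 leR Q leQ)"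
  proof (intro impI allI, rule ccontr)
    fix R1 R2 assume A: "in_SAv R leR (P <+> Q) (lin_sum_le leP leQ)"
      and pa: "ordered_partition2 R leR R1 R2" and n: "\<not> (in_SAv R1 leR P leP \<or> in_SAv R2 leR Q leQ)"
    have s: "R1 \<subseteq> R" "R2 \<subseteq> R" "R1 \<inter> R2 = {}" and o: "\<forall>x\<in>R1. \<forall>y\<in>R2. leR x y"
      using pa unfolding ordered_partition2_def partition2_def by auto
    have w1: "weakly_contains R1 leR P leP" using n sav_sub[OF R s(1), of P leP] by simp
      have w2: "weakly_contains R2 leR Q leQ" using n sav_sub[OF R s(2), of Q leQ] by simp
      from w1 w2 obtain f g where
      f: "f ` P \<subseteq> R1" "inj_on f P" "\<forall>x\<in>P. \<forall>y\<in>P. leP x y \<longrightarrow> leR (f x) (f y)" and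
      g: "g ` Q \<subseteq> R2" "inj_on g Q" "\<forall>x\<in>Q. \<forall>y\<in>Q. leQ x y \<longrightarrow> leR (g x) (g y)"
      unfolding weakly_contains_def by (elim exE conjE) (rule that; assumption)
    have "weakly_contains R leR (P <+> Q) (lin_sum_le leP leQ)"
      unfolding weakly_contains_def
    proof (intro exI conjI)
      show "case_sum f g ` (P <+> Q) \<subseteq> R" using f(1) g(1) s(1,2) unfolding image_subset_iff by (auto elim!: PlusE)
      show "inj_on (case_sum f g) (P <+> Q)" using combine[OF f(1,2) g(1,2) s(3)] .
      show "\<forall>x\<in>P <+> Q. \<forall>y\<in>P <+> Q. lin_sum_le leP leQ x y \<longrightarrow> leR (case_sum f g x) (case_sum f g y)"
        by (rule mono_case[OF f(3) g(3)]) (use f(1) g(1) o in \<open>auto simp: image_subset_iff\<close>)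
    qed
    with A show False using SR[of "P <+> Q" "lin_sum_le leP leQ"] by simp
  qed
  show "\<not> in_SAv R leR (P <+> Q) (lin_sum_le leP leQ) \<longrightarrow>
            (\<exists>R1 R2. weakly_ordered_partition2 R leR R1 R2 \<and>
                     \<not> in_SAv R1 leR P leP \<and> \<not> in_SAv R2 leR Q leQ)"
  proof
    assume "\<not> in_SAv R leR (P <+> Q) (lin_sum_le leP leQ)"
    then have "weakly_contains R leR (P <+> Q) (lin_sum_le leP leQ)" using SR[of "P <+> Q" "lin_sum_le leP leQ"] by simp
    then obtain h where h: "h ` (P <+> Q) \<subseteq> R" "inj_on h (P <+> Q)"
      "\<forall>x\<in>P <+> Q. \<forall>y\<in>P <+> Q. lin_sum_le leP leQ x y \<longrightarrow> leR (h x) (h y)"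
      unfolding weakly_contains_def by (elim exE conjE) (rule that; assumption)
    define R1 where "R1 = {r\<in>R. \<exists>x\<in>P. leR r (h (Inl x))}"
    have hl: "h (Inl x) \<in> R" if "x \<in> P" for x using h(1) that unfolding image_subset_iff by auto
    have hr: "h (Inr x) \<in> R" if "x \<in> Q" for x using h(1) that unfolding image_subset_iff by auto
    have wo: "weakly_ordered_partition2 R leR R1 (R - R1)"
      unfolding weakly_ordered_partition2_def partition2_def
    proof (intro conjI ballI)
      fix x y assume x: "x \<in> R1" and y: "y \<in> R - R1"
      show "\<not> leR y x"
      proof
        assume yx: "leR y x"
        from x obtain p where p: "p \<in> P" "leR x (h (Inl p))" "x \<in> R" unfolding R1_def by auto
        have "leR y (h (Inl p))" using po(3)[of y x "h (Inl p)"] y p yx hl by auto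
        with y p show False unfolding R1_def by auto
      qed
    qed (auto simp: R1_def)
    have "weakly_contains R1 leR P leP"
      unfolding weakly_contains_def
    proof (rule exI[of _ "h \<circ> Inl"], intro conjI)
      show "(h \<circ> Inl) ` P \<subseteq> R1" unfolding R1_def using hl po(1) by auto
      show "inj_on (h \<circ> Inl) P" using h(2) by (rule inj_inl)
      show "\<forall>x\<in>P. \<forall>y\<in>P. leP x y \<longrightarrow> leR ((h \<circ> Inl) x) ((h \<circ> Inl) y)" using mono_inl[where P=P and Q=Q and le="lin_sum_le leP leQ" and leR=leR and h=h and leP=leP, OF h(3)] by simp
    qed
    moreover have "weakly_contains (R - R1) leR Q leQ"
      unfolding weakly_contains_def
    proof (rule exI[of _ "h \<circ> Inr"], intro conjI)
      show "(h \<circ> Inr) ` Q \<subseteq> R - R1"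
      proof
        fix r assume "r \<in> (h \<circ> Inr) ` Q"
        then obtain q where q: "q \<in> Q" "r = h (Inr q)" by auto
        show "r \<in> R - R1"
        proof
          show "r \<in> R" using q hr by auto
          show "r \<notin> R1"
          proof
            assume "r \<in> R1"
            then obtain p where p: "p \<in> P" "leR r (h (Inl p))" unfolding R1_def by auto
            have "leR (h (Inl p)) (h (Inr q))" using h(3)[rule_format, of "Inl p" "Inr q"] p q by (simp add: InlI InrI)
            then have "h (Inl p) = h (Inr q)" using po(2) p q hl hr by auto
            then show False using h(2) p q unfolding inj_on_def by blast
          qed
        qed
      qed
      show "inj_on (h \<circ> Inr) Q" using h(2) by (rule inj_inr)
      show "\<forall>x\<in>Q. \<forall>y\<in>Q. leQ x y \<longrightarrow> leR ((h \<circ> Inr) x) ((h \<circ> Inr) y)" using mono_inr[where P=P and Q=Q and le="lin_sum_le leP leQ" and leR=leR and h=h and leQ=leQ, OF h(3)] by simp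
    qed
    ultimately show "\<exists>R1 R2. weakly_ordered_partition2 R leR R1 R2 \<and>
                     \<not> in_SAv R1 leR P leP \<and> \<not> in_SAv R2 leR Q leQ"
      using wo unfolding in_SAv_def by blast
  qed
qed

end
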